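(* Fix integers $K\ge1$, $m_0\ge1$, a $p\times p$ matrix $G$, a threshold $\delta>0$, and $\epsilon>0$. Suppose the graph $\mathcal G^{*,\delta}$ is $K$-sparse, and that $\mathrm{sgn}(|\beta_1|),\dots,\mathrm{sgn}(|\beta_p|)$ are i.i.d. Bernoulli$(\epsilon)$. Then, except on an event of probability at most $p(e\epsilon K)^{m_0+1}$, $m_0^*(S(\beta),G,\delta)\le m_0$.
   Context: $\Omega^{*,\delta}(i,j)=G(i,j)1\{|G(i,j)|\ge\delta\}$; $\mathcal G^{*,\delta}$ is the graph on $\{1,\dots,p\}$ with an edge between $i\ne j$ iff $\Omega^{*,\delta}(i,j)\ne0$. A graph is $K$-sparse if its maximum degree is at most $K$. $S(\beta)=\{j:\beta_j\ne0\}$; $\mathcal G^{*,\delta}_S$ is the subgraph of $\mathcal G^{*,\delta}$ induced by $S(\beta)$, and $m_0^*(S(\beta),G,\delta)$ is the maximum number of nodes in a connected component of $\mathcal G^{*,\delta}_S$. *)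

theory Defs
  imports "HOL-Probability.Probability"
begin

text \<open>Nodes are 1..p. Matrices are functions nat => nat => real.\<close>

definition Omega_thr :: "(nat \<Rightarrow> nat \<Rightarrow> real) \<Rightarrow> real \<Rightarrow> nat \<Rightarrow> nat \<Rightarrow> real" where
  "Omega_thr G \<delta> i j = G i j * (if \<bar>G i j\<bar> \<ge> \<delta> then 1 else 0)"

text \<open>Undirected edge of the thresholded graph (symmetrised; coincides with the paper for symmetric G).\<close>
definition thr_edge :: "(nat \<Rightarrow> nat \<Rightarrow> real) \<Rightarrow> real \<Rightarrow> nat \<Rightarrow> nat \<Rightarrow> bool" where
  "thr_edge G \<delta> i j \<longleftrightarrow> i \<noteq> j \<and> (Omega_thr G \<delta> i j \<noteq> 0 \<or> Omega_thr G \<delta> j i \<noteq> 0)"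

definition K_sparse :: "nat \<Rightarrow> (nat \<Rightarrow> nat \<Rightarrow> real) \<Rightarrow> real \<Rightarrow> nat \<Rightarrow> bool" where
  "K_sparse p G \<delta> K \<longleftrightarrow> (\<forall>i\<in>{1..p}. card {j\<in>{1..p}. thr_edge G \<delta> i j} \<le> K)"

definition component_in :: "nat set \<Rightarrow> (nat \<Rightarrow> nat \<Rightarrow> real) \<Rightarrow> real \<Rightarrow> nat \<Rightarrow> nat set" where
  "component_in S G \<delta> i = {j. i \<in> S \<and> (\<lambda>a b. a \<in> S \<and> b \<in> S \<and> thr_edge G \<delta> a b)\<^sup>*\<^sup>* i j}"

definition m0_star :: "nat set \<Rightarrow> (nat \<Rightarrow> nat \<Rightarrow> real) \<Rightarrow> real \<Rightarrow> nat" where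
  "m0_star S G \<delta> = Max (insert 0 ((\<lambda>i. card (component_in S G \<delta> i)) ` S))"

definition supp_vec :: "nat \<Rightarrow> (nat \<Rightarrow> real) \<Rightarrow> nat set" where
  "supp_vec p \<beta> = {j\<in>{1..p}. \<beta> j \<noteq> 0}"

end

theory Submission
  imports Defs
begin

definition conn :: "(nat \<Rightarrow> nat \<Rightarrow> bool) \<Rightarrow> nat set \<Rightarrow> nat \<Rightarrow> bool" where
  "conn E C v \<longleftrightarrow> v \<in> C \<and> (\<forall>d\<in>C. (\<lambda>a b. a \<in> C \<and> b \<in> C \<and> E a b)\<^sup>*\<^sup>* v d)"

definition bnd :: "(nat \<Rightarrow> nat \<Rightarrow> bool) \<Rightarrow> nat set \<Rightarrow> nat set \<Rightarrow> nat set" where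
  "bnd E V C = {u\<in>V. u \<notin> C \<and> (\<exists>c\<in>C. E c u)}"

lemma conn_sub:
  assumes "conn E C v" "conn E D v" "D \<subseteq> A" "bnd E V C \<inter> A = {}" "D \<subseteq> V"
  shows "D \<subseteq> C"
proof
  fix d assume d: "d \<in> D"
  have "(\<lambda>a b. a \<in> D \<and> b \<in> D \<and> E a b)\<^sup>*\<^sup>* v d" using assms(2) d unfolding conn_def by blast
  then show "d \<in> C"
  proof (induction rule: rtranclp_induct)
    case base then show ?case using assms(1) unfolding conn_def by blast
  next
    case (step a b)
    show ?case
    proof (rule ccontr)
      assume "b \<notin> C"
      then have "b \<in> bnd E V C" using step assms(5) unfolding bnd_def by blast
      moreover have "b \<in> A" using step assms(3) by blast
      ultimately show False using assms(4) by blast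
    qed
  qed
qed

lemma comp_sub:
  assumes "(\<lambda>a b. a \<in> S \<and> b \<in> S \<and> E a b)\<^sup>*\<^sup>* i j" "i \<in> S"
  shows "j \<in> S"
  using assms by (induction rule: rtranclp_induct) auto

lemma grow:
  assumes "finite S" "i \<in> S"
  shows "1 \<le> k \<Longrightarrow> k \<le> card {j. (\<lambda>a b. a \<in> S \<and> b \<in> S \<and> E a b)\<^sup>*\<^sup>* i j} \<Longrightarrow>
    \<exists>D. conn E D i \<and> card D = k \<and> D \<subseteq> {j. (\<lambda>a b. a \<in> S \<and> b \<in> S \<and> E a b)\<^sup>*\<^sup>* i j}"
proof (induction k)
  case 0 then show ?case by simp
next
  case (Suc k)
  define R where "R = (\<lambda>a b. a \<in> S \<and> b \<in> S \<and> E a b)"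
  define comp where "comp = {j. R\<^sup>*\<^sup>* i j}"
  have compS: "comp \<subseteq> S"
  proof
    fix j assume "j \<in> comp"
    then have "R\<^sup>*\<^sup>* i j" unfolding comp_def by simp
    then show "j \<in> S" using comp_sub[of S E i j] assms(2) unfolding R_def by blast
  qed
  have fc: "finite comp" using compS assms(1) finite_subset by blast
  show ?case
  proof (cases "k = 0")
    case True
    have "conn E {i} i" unfolding conn_def by auto
    moreover have "i \<in> comp" unfolding comp_def by simp
    ultimately show ?thesis using True unfolding comp_def R_def by (intro exI[of _ "{i}"]) auto
  next
    case False
    have k1: "1 \<le> k" using False by simp
    have kc: "k \<le> card {j. (\<lambda>a b. a \<in> S \<and> b \<in> S \<and> E a b)\<^sup>*\<^sup>* i j}"
      using Suc.prems(2) by simp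
    obtain D where D: "conn E D i" "card D = k" "D \<subseteq> comp"
      using Suc.IH[OF k1 kc] unfolding comp_def R_def by blast
    have fD: "finite D" using D(3) fc finite_subset by blast
    have iD: "i \<in> D" using D(1) by (simp add: conn_def)
    have "k < card comp" using Suc.prems(2) unfolding comp_def R_def by simp
    have "\<not> comp \<subseteq> D"
    proof
      assume "comp \<subseteq> D"
      then have "card comp \<le> card D" by (rule card_mono[OF fD])
      then show False using \<open>k < card comp\<close> D(2) by simp
    qed
    then obtain j where j: "j \<in> comp" "j \<notin> D" by blast
    have "\<exists>a b. a \<in> D \<and> b \<notin> D \<and> R a b"
    proof (rule ccontr)
      assume nn: "\<not> ?thesis"
      have nn': "\<And>a b. a \<in> D \<Longrightarrow> R a b \<Longrightarrow> b \<in> D" using nn by blast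
      have "R\<^sup>*\<^sup>* i y \<Longrightarrow> y \<in> D" for y
      proof (induction rule: rtranclp_induct)
        case base then show ?case by (rule iD)
      next
        case (step y z) then show ?case using nn' by blast
      qed
      then show False using j unfolding comp_def by blast
    qed
    then obtain a b where ab: "a \<in> D" "b \<notin> D" "R a b" by blast
    have "R\<^sup>*\<^sup>* i a" using ab(1) D(3) unfolding comp_def by blast
    then have "R\<^sup>*\<^sup>* i b" using ab(3) by (rule rtranclp.rtrancl_into_rtrancl)
    then have bc: "b \<in> comp" unfolding comp_def by simp
    have mono: "(\<lambda>x y. x \<in> D \<and> y \<in> D \<and> E x y)\<^sup>*\<^sup>* i d \<Longrightarrow>
        (\<lambda>x y. x \<in> insert b D \<and> y \<in> insert b D \<and> E x y)\<^sup>*\<^sup>* i d" for d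
    proof -
      assume h: "(\<lambda>x y. x \<in> D \<and> y \<in> D \<and> E x y)\<^sup>*\<^sup>* i d"
      have le: "(\<lambda>x y. x \<in> D \<and> y \<in> D \<and> E x y) \<le> (\<lambda>x y. x \<in> insert b D \<and> y \<in> insert b D \<and> E x y)"
        by auto
      show ?thesis by (rule predicate2D[OF rtranclp_mono[OF le] h])
    qed
    have pD: "\<And>d. d \<in> D \<Longrightarrow> (\<lambda>x y. x \<in> D \<and> y \<in> D \<and> E x y)\<^sup>*\<^sup>* i d"
      using D(1) by (simp add: conn_def)
    have cn: "conn E (insert b D) i"
      unfolding conn_def
    proof (intro conjI ballI)
      show "i \<in> insert b D" using iD by simp
      fix d assume "d \<in> insert b D"
      then show "(\<lambda>x y. x \<in> insert b D \<and> y \<in> insert b D \<and> E x y)\<^sup>*\<^sup>* i d"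
      proof
        assume "d = b"
        have "(\<lambda>x y. x \<in> insert b D \<and> y \<in> insert b D \<and> E x y)\<^sup>*\<^sup>* i a"
          by (rule mono[OF pD[OF ab(1)]])
        moreover have "(\<lambda>x y. x \<in> insert b D \<and> y \<in> insert b D \<and> E x y) a b"
          using ab unfolding R_def by simp
        ultimately have "(\<lambda>x y. x \<in> insert b D \<and> y \<in> insert b D \<and> E x y)\<^sup>*\<^sup>* i b"
          by (rule rtranclp.rtrancl_into_rtrancl)
        then show ?thesis using \<open>d = b\<close> by simp
      next
        assume "d \<in> D" then show ?thesis by (rule mono[OF pD])
      qed
    qed
    have cd: "card (insert b D) = Suc k" using D(2) fD ab(2) by simp
    have sub': "insert b D \<subseteq> comp" using D(3) bc by simp
    show ?thesis using cn cd sub' unfolding comp_def R_def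
      by (intro exI[of _ "insert b D"] conjI) assumption+
  qed
qed

lemma has_nb:
  assumes "conn E C v" "2 \<le> card C" "c \<in> C" "\<And>a b. E a b \<Longrightarrow> E b a"
  shows "\<exists>d\<in>C. E c d"
proof (cases "c = v")
  case True
  have "\<not> C \<subseteq> {v}"
  proof
    assume "C \<subseteq> {v}"
    then have "card C \<le> card {v}" by (intro card_mono) auto
    then show False using assms(2) by simp
  qed
  then obtain w where w: "w \<in> C" "w \<noteq> v" by blast
  have "(\<lambda>a b. a \<in> C \<and> b \<in> C \<and> E a b)\<^sup>*\<^sup>* v w" using assms(1) w unfolding conn_def by blast
  then have "w \<noteq> v \<longrightarrow> (\<exists>d\<in>C. E v d)"
    by (induction rule: converse_rtranclp_induct) auto
  then show ?thesis using w True by blast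
next
  case False
  have "(\<lambda>a b. a \<in> C \<and> b \<in> C \<and> E a b)\<^sup>*\<^sup>* v c" using assms(1,3) unfolding conn_def by blast
  then have "c \<noteq> v \<longrightarrow> (\<exists>d\<in>C. E d c)"
    by (induction rule: rtranclp_induct) auto
  then show ?thesis using False assms(4) by blast
qed

lemma bnd_card:
  assumes "conn E C v" "2 \<le> card C" "C \<subseteq> V" "finite V" "\<And>a b. E a b \<Longrightarrow> E b a"
    "\<And>c. c \<in> V \<Longrightarrow> card {j\<in>V. E c j} \<le> K"
  shows "card (bnd E V C) \<le> (K - 1) * card C"
proof -
  have fC: "finite C" using assms(3,4) finite_subset by blast
  have "bnd E V C \<subseteq> (\<Union>c\<in>C. {j\<in>V. E c j} - C)" unfolding bnd_def by blast
  then have "card (bnd E V C) \<le> card (\<Union>c\<in>C. {j\<in>V. E c j} - C)"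
    by (intro card_mono) (use fC assms(4) in auto)
  also have "\<dots> \<le> (\<Sum>c\<in>C. card ({j\<in>V. E c j} - C))" by (rule card_UN_le[OF fC])
  also have "\<dots> \<le> (\<Sum>c\<in>C. K - 1)"
  proof (rule sum_mono)
    fix c assume c: "c \<in> C"
    obtain d where d: "d \<in> C" "E c d" using has_nb[OF assms(1,2) c assms(5)] by blast
    have "{j\<in>V. E c j} - C \<subset> {j\<in>V. E c j}" using d assms(3) by blast
    then have "card ({j\<in>V. E c j} - C) < card {j\<in>V. E c j}"
      by (intro psubset_card_mono) (use assms(4) in auto)
    moreover have "card {j\<in>V. E c j} \<le> K" using assms(6) c assms(3) by blast
    ultimately show "card ({j\<in>V. E c j} - C) \<le> K - 1" by linarith
  qed
  also have "\<dots> = (K - 1) * card C" by simp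
  finally show ?thesis .
qed

lemma exp_bound_aux:
  assumes "K \<ge> (1::nat)"
  shows "1 \<le> (1 - 1 / real K) ^ (K - 1) * exp 1"
proof (cases "K = 1")
  case True then show ?thesis by simp
next
  case False
  define n where "n = K - 1"
  have n: "n > 0" "real K = real n + 1" using False assms unfolding n_def by auto
  have e: "(1 + 1 / real n) ^ n \<le> exp 1"
    using exp_ge_one_plus_x_over_n_power_n[where x=1 and n=n] n(1) by simp
  have eq: "(1 - 1 / real K) ^ n * (1 + 1 / real n) ^ n = 1"
  proof -
    have pn: "real n > 0" using n by simp
    have a1: "1 - 1 / real K = real n / (real n + 1)" using n(2) pn by (simp add: field_simps)
    have a2: "1 + 1 / real n = (real n + 1) / real n" using pn by (simp add: field_simps)
    have "(1 - 1 / real K) * (1 + 1 / real n) = 1" unfolding a1 a2 using pn by simp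
    then show ?thesis by (metis power_mult_distrib power_one)
  qed
  have "1 = (1 - 1 / real K) ^ n * (1 + 1 / real n) ^ n" using eq by simp
  also have "\<dots> \<le> (1 - 1 / real K) ^ n * exp 1"
    by (intro mult_left_mono e) (use n in simp)
  finally show ?thesis unfolding n_def .
qed

lemma count_bound:
  assumes fV: "finite V" and K: "K \<ge> 1" and m: "2 \<le> m"
    and sym: "\<And>a b. E a b \<Longrightarrow> E b a"
    and deg: "\<And>c. c \<in> V \<Longrightarrow> card {j\<in>V. E c j} \<le> K"
  shows "real (card {C. C \<subseteq> V \<and> card C = m \<and> conn E C v}) \<le> (exp 1 * real K) ^ m"
proof -
  define F where "F = {C. C \<subseteq> V \<and> card C = m \<and> conn E C v}"
  have fF: "finite F" unfolding F_def using fV by (rule rev_finite_subset[OF finite_Pow_iff[THEN iffD2]]) auto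
  define x where "x = 1 / real K"
  have x: "0 < x" "x \<le> 1" using K unfolding x_def by auto
  define Q where "Q = Pi_pmf V False (\<lambda>_. bernoulli_pmf x)"
  define B where "B C j = (if j \<in> C then {True} else if j \<in> bnd E V C then {False} else UNIV)" for C j
  define ev where "ev C = Pi V (B C)" for C
  define q where "q = x ^ m * (1 - x) ^ ((K - 1) * m)"
  have pev: "measure_pmf.prob Q (ev C) = x ^ card C * (1 - x) ^ card (bnd E V C)" if "C \<subseteq> V" for C
  proof -
    have "measure_pmf.prob Q (ev C) = (\<Prod>j\<in>V. measure_pmf.prob (bernoulli_pmf x) (B C j))"
      unfolding Q_def ev_def by (rule measure_Pi_pmf_Pi[OF fV])
    also have "\<dots> = (\<Prod>j\<in>V. if j \<in> C then x else if j \<in> bnd E V C then 1 - x else 1)"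
      by (intro prod.cong refl) (use x in \<open>auto simp: B_def measure_pmf_single\<close>)
    also have "\<dots> = x ^ card C * (1 - x) ^ card (bnd E V C)"
    proof -
      have s1: "V \<inter> {j. j \<in> C} = C" using that by blast
      have s2: "V \<inter> - {j. j \<in> C} \<inter> {j. j \<in> bnd E V C} = bnd E V C" unfolding bnd_def by blast
      have s3: "V \<inter> C = C" "V \<inter> (- C \<inter> bnd E V C) = bnd E V C" using that unfolding bnd_def by blast+
      show ?thesis using fV by (simp add: prod.If_cases s1 s2 s3 Int_assoc)
    qed
    finally show ?thesis .
  qed
  have lower: "q \<le> measure_pmf.prob Q (ev C)" if "C \<in> F" for C
  proof -
    have C: "C \<subseteq> V" "card C = m" "conn E C v" using that unfolding F_def by auto
    have "card (bnd E V C) \<le> (K - 1) * m"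
      using bnd_card[OF C(3) _ C(1) fV sym deg] C(2) m by auto
    then have "(1 - x) ^ ((K - 1) * m) \<le> (1 - x) ^ card (bnd E V C)"
      by (intro power_decreasing) (use x in auto)
    then show ?thesis unfolding q_def pev[OF C(1)] C(2)
      by (intro mult_left_mono) (use x in auto)
  qed
  have disj: "disjoint_family_on ev F"
    unfolding disjoint_family_on_def
  proof (intro ballI impI)
    fix C D assume CD: "C \<in> F" "D \<in> F" "C \<noteq> D"
    show "ev C \<inter> ev D = {}"
    proof (rule ccontr)
      assume "ev C \<inter> ev D \<noteq> {}"
      then obtain \<omega> where w: "\<omega> \<in> ev C" "\<omega> \<in> ev D" by blast
      have C: "C \<subseteq> V" "conn E C v" and D: "D \<subseteq> V" "conn E D v" using CD unfolding F_def by auto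
      have sub: "X \<subseteq> {j. \<omega> j}" "bnd E V X \<inter> {j. \<omega> j} = {}" if "\<omega> \<in> ev X" "X \<subseteq> V" for X
      proof -
        show "X \<subseteq> {j. \<omega> j}"
        proof
          fix j assume "j \<in> X" then show "j \<in> {j. \<omega> j}"
            using that unfolding ev_def B_def by (auto simp: Pi_def)
        qed
        show "bnd E V X \<inter> {j. \<omega> j} = {}"
        proof (rule ccontr)
          assume "bnd E V X \<inter> {j. \<omega> j} \<noteq> {}"
          then obtain j where j: "j \<in> bnd E V X" "\<omega> j" by blast
          then have "j \<in> V" "j \<notin> X" unfolding bnd_def by auto
          then show False using that j unfolding ev_def B_def Pi_def by force
        qed
      qed
      have "D \<subseteq> C" using conn_sub[OF C(2) D(2) sub(1)[OF w(2) D(1)] sub(2)[OF w(1) C(1)] D(1)] .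
      moreover have "C \<subseteq> D" using conn_sub[OF D(2) C(2) sub(1)[OF w(1) C(1)] sub(2)[OF w(2) D(1)] C(1)] .
      ultimately show False using CD by blast
    qed
  qed
  have q0: "0 \<le> q" unfolding q_def using x by simp
  have "real (card F) * q \<le> (\<Sum>C\<in>F. measure_pmf.prob Q (ev C))"
    by (rule sum_bounded_below) (rule lower)
  also have "\<dots> = measure_pmf.prob Q (\<Union>C\<in>F. ev C)"
    by (rule measure_pmf.finite_measure_finite_Union[symmetric]) (use fF disj in auto)
  also have "\<dots> \<le> 1" by simp
  finally have cq: "real (card F) * q \<le> 1" .
  have qe: "1 \<le> q * (exp 1 * real K) ^ m"
  proof -
    have "q * (exp 1 * real K) ^ m = ((1 - x) ^ (K - 1) * exp 1) ^ m"
      unfolding q_def x_def using K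
      by (simp add: power_mult_distrib power_mult[symmetric] mult.commute field_simps)
    moreover have "1 \<le> ((1 - x) ^ (K - 1) * exp 1) ^ m"
      using exp_bound_aux[OF K] unfolding x_def by (intro one_le_power) auto
    ultimately show ?thesis by simp
  qed
  have "real (card F) \<le> real (card F) * (q * (exp 1 * real K) ^ m)"
    using qe by (simp add: mult_le_cancel_left1)
  also have "\<dots> = (real (card F) * q) * (exp 1 * real K) ^ m" by simp
  also have "\<dots> \<le> (exp 1 * real K) ^ m"
    using cq q0 by (intro mult_left_le_one_le) auto
  finally show ?thesis unfolding F_def .
qed

theorem lemma1:
  fixes p K m0 :: nat and G :: "nat \<Rightarrow> nat \<Rightarrow> real" and \<delta> \<epsilon> :: real
    and M :: "'w measure" and \<beta> :: "'w \<Rightarrow> nat \<Rightarrow> real"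
  assumes "K \<ge> 1" and "m0 \<ge> 1" and "\<delta> > 0" and "\<epsilon> > 0" and "\<epsilon> \<le> 1"
    and "K_sparse p G \<delta> K"
    and "prob_space M"
    and "prob_space.indep_vars M (\<lambda>_. count_space UNIV) (\<lambda>j \<omega>. \<beta> \<omega> j \<noteq> 0) {1..p}"
    and "\<forall>j\<in>{1..p}. distr M (count_space UNIV) (\<lambda>\<omega>. \<beta> \<omega> j \<noteq> 0) = measure_pmf (bernoulli_pmf \<epsilon>)"
  shows "measure M {\<omega> \<in> space M. m0_star (supp_vec p (\<beta> \<omega>)) G \<delta> > m0}
           \<le> real p * (exp 1 * \<epsilon> * real K) ^ (m0 + 1)"
proof -
  interpret prob_space M by (rule assms(7))
  define V where "V = {1..p}"
  define E where "E = thr_edge G \<delta>"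
  define m where "m = m0 + 1"
  define X where "X = (\<lambda>j \<omega>. \<beta> \<omega> j \<noteq> 0)"
  define Fam where "Fam v = {C. C \<subseteq> V \<and> card C = m \<and> conn E C v}" for v
  define evt where "evt C = (\<Inter>j\<in>C. X j -` {True} \<inter> space M)" for C
  have fV: "finite V" unfolding V_def by simp
  have m2: "2 \<le> m" using assms(2) unfolding m_def by simp
  have indep: "indep_vars (\<lambda>_. count_space UNIV) X V"
    using assms(8) unfolding X_def V_def by simp
  have rv: "X j \<in> measurable M (count_space UNIV)" if "j \<in> V" for j
    using indep that unfolding indep_vars_def by blast
  have sym: "\<And>a b. E a b \<Longrightarrow> E b a" unfolding E_def thr_edge_def by auto
  have deg: "\<And>c. c \<in> V \<Longrightarrow> card {j\<in>V. E c j} \<le> K"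
    using assms(6) unfolding K_sparse_def V_def E_def by blast
  have fFam: "finite (Fam v)" for v
    unfolding Fam_def using fV by (rule rev_finite_subset[OF finite_Pow_iff[THEN iffD2]]) auto
  have Fam_ne: "C \<noteq> {}" "finite C" "C \<subseteq> V" if "C \<in> Fam v" for C v
    using that m2 fV unfolding Fam_def by (auto intro: finite_subset)
  have evt_sets: "evt C \<in> sets M" if "C \<in> Fam v" for C v
    unfolding evt_def using Fam_ne[OF that] rv
    by (intro sets.finite_INT measurable_sets) auto
  have p1: "prob (X j -` {True} \<inter> space M) = \<epsilon>" if "j \<in> V" for j
  proof -
    have "prob (X j -` {True} \<inter> space M) = measure (distr M (count_space UNIV) (X j)) {True}"
      by (rule measure_distr[symmetric]) (use rv[OF that] in auto)
    also have "\<dots> = measure_pmf.prob (bernoulli_pmf \<epsilon>) {True}"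
      using assms(9) that unfolding X_def V_def by simp
    also have "\<dots> = \<epsilon>" using assms(4,5) by (simp add: measure_pmf_single)
    finally show ?thesis .
  qed
  have pevt: "prob (evt C) = \<epsilon> ^ m" if "C \<in> Fam v" for C v
  proof -
    have "prob (evt C) = (\<Prod>j\<in>C. prob (X j -` {True} \<inter> space M))"
      unfolding evt_def using Fam_ne[OF that]
      by (intro indep_varsD[OF indep]) auto
    also have "\<dots> = (\<Prod>j\<in>C. \<epsilon>)" using Fam_ne[OF that] p1 by (intro prod.cong) auto
    also have "\<dots> = \<epsilon> ^ m" using that unfolding Fam_def by simp
    finally show ?thesis .
  qed
  have cnt: "real (card (Fam v)) \<le> (exp 1 * real K) ^ m" for v
    unfolding Fam_def using count_bound[OF fV assms(1) m2 sym deg] .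
  have subs: "{\<omega> \<in> space M. m0_star (supp_vec p (\<beta> \<omega>)) G \<delta> > m0} \<subseteq> (\<Union>v\<in>V. \<Union>C\<in>Fam v. evt C)"
  proof
    fix \<omega> assume w: "\<omega> \<in> {\<omega> \<in> space M. m0_star (supp_vec p (\<beta> \<omega>)) G \<delta> > m0}"
    define S where "S = supp_vec p (\<beta> \<omega>)"
    have SV: "S \<subseteq> V" unfolding S_def supp_vec_def V_def by auto
    have fS: "finite S" using SV fV finite_subset by blast
    have "m0 < Max (insert 0 ((\<lambda>i. card (component_in S G \<delta> i)) ` S))"
      using w unfolding S_def m0_star_def by simp
    then obtain i where i: "i \<in> S" "m0 < card (component_in S G \<delta> i)"
      using fS by (auto simp: Max_gr_iff)
    define R where "R = (\<lambda>a b. a \<in> S \<and> b \<in> S \<and> E a b)"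
    have ceq: "component_in S G \<delta> i = {j. R\<^sup>*\<^sup>* i j}"
      unfolding component_in_def R_def E_def using i(1) by simp
    obtain D where D: "conn E D i" "card D = m" "D \<subseteq> {j. R\<^sup>*\<^sup>* i j}"
      using grow[OF fS i(1), of m E] i(2) ceq unfolding m_def R_def by auto
    have DS: "D \<subseteq> S" using D(3) comp_sub[of S E i] i(1) unfolding R_def by blast
    have "D \<in> Fam i" unfolding Fam_def using D DS SV by auto
    moreover have "\<omega> \<in> evt D"
      unfolding evt_def X_def using DS w unfolding S_def supp_vec_def by auto
    ultimately show "\<omega> \<in> (\<Union>v\<in>V. \<Union>C\<in>Fam v. evt C)" using i(1) SV by blast
  qed
  have Usets: "(\<Union>C\<in>Fam v. evt C) \<in> sets M" for v
    using fFam evt_sets by (intro sets.finite_UN) auto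
  have "measure M {\<omega> \<in> space M. m0_star (supp_vec p (\<beta> \<omega>)) G \<delta> > m0}
      \<le> measure M (\<Union>v\<in>V. \<Union>C\<in>Fam v. evt C)"
    by (rule finite_measure_mono[OF subs sets.finite_UN[OF fV Usets]])
  also have "\<dots> \<le> (\<Sum>v\<in>V. measure M (\<Union>C\<in>Fam v. evt C))"
    by (rule measure_UNION_le[OF fV Usets])
  also have "\<dots> \<le> (\<Sum>v\<in>V. \<Sum>C\<in>Fam v. measure M (evt C))"
  proof (rule sum_mono)
    fix v assume "v \<in> V"
    show "measure M (\<Union>C\<in>Fam v. evt C) \<le> (\<Sum>C\<in>Fam v. measure M (evt C))"
      by (rule measure_UNION_le[OF fFam evt_sets])
  qed
  also have "\<dots> = (\<Sum>v\<in>V. real (card (Fam v)) * \<epsilon> ^ m)"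
  proof (rule sum.cong[OF refl])
    fix v assume "v \<in> V"
    have "(\<Sum>C\<in>Fam v. measure M (evt C)) = (\<Sum>C\<in>Fam v. \<epsilon> ^ m)"
      by (rule sum.cong[OF refl]) (rule pevt)
    then show "(\<Sum>C\<in>Fam v. measure M (evt C)) = real (card (Fam v)) * \<epsilon> ^ m"
      by (simp only: sum_constant)
  qed
  also have "\<dots> \<le> (\<Sum>v\<in>V. (exp 1 * real K) ^ m * \<epsilon> ^ m)"
  proof (rule sum_mono)
    fix v assume "v \<in> V"
    show "real (card (Fam v)) * \<epsilon> ^ m \<le> (exp 1 * real K) ^ m * \<epsilon> ^ m"
      by (rule mult_right_mono[OF cnt]) (use assms(4) in simp)
  qed
  also have "\<dots> = real (card V) * ((exp 1 * real K) ^ m * \<epsilon> ^ m)"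
    by (rule sum_constant)
  also have "\<dots> = real p * (exp 1 * \<epsilon> * real K) ^ (m0 + 1)"
  proof -
    have "(exp 1 * real K) ^ m * \<epsilon> ^ m = (exp 1 * \<epsilon> * real K) ^ m"
      by (metis mult.assoc mult.commute power_mult_distrib)
    moreover have "card V = p" unfolding V_def by simp
    ultimately show ?thesis unfolding m_def by simp
  qed
  finally show ?thesis .
qed

end
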